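(* For all integers $\lambda\geq 1$ we have $\tilde m_\lambda<1/2<m_\lambda$. Moreover, as $\lambda\to\infty$, \[ m_\lambda = \frac 12 + \frac 1{2\sqrt{\pi\lambda}} + \frac{15}{16\sqrt{\pi}\lambda^{3/2}} + O\bigl(\lambda^{-5/2}\bigr) \] and \[ \tilde m_\lambda = \frac 12 - \frac 1{2\sqrt{\pi\lambda}} + \frac{49}{16\sqrt{\pi}\lambda^{3/2}} + O\bigl(\lambda^{-5/2}\bigr). \]
   Context: $s(n)$ denotes the binary sum of digits of $n\ge0$. For $t\ge0$, $c_t$ (resp. $\tilde c_t$) is the asymptotic density of $\{n\ge0: s(n+t)\ge s(n)\}$ (resp. $\{n\ge 0: s(n+t)>s(n)\}$). For $\lambda\ge0$, $m_\lambda = 2^{-\lambda} \sum_{2^\lambda\leq t<2^{\lambda+1}}c_t$ and $\tilde m_\lambda = 2^{-\lambda} \sum_{2^\lambda\leq t<2^{\lambda+1}}\tilde c_t$. *)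

theory Defs
  imports "HOL-Analysis.Analysis" "HOL-Library.Landau_Symbols"
begin

fun bsum :: "nat \<Rightarrow> nat" where
  "bsum n = (if n = 0 then 0 else n mod 2 + bsum (n div 2))"

declare bsum.simps[simp del]

definition asymp_density :: "nat set \<Rightarrow> real" where
  "asymp_density A = lim (\<lambda>N. real (card {n \<in> A. n < N}) / real N)"

definition c_t :: "nat \<Rightarrow> real" where
  "c_t t = asymp_density {n. bsum (n + t) \<ge> bsum n}"

definition c_tilde :: "nat \<Rightarrow> real" where
  "c_tilde t = asymp_density {n. bsum (n + t) > bsum n}"

definition m_lam :: "nat \<Rightarrow> real" where
  "m_lam l = (\<Sum>t\<in>{2^l..<2^(l+1)}. c_t t) / 2 ^ l"

definition m_tilde :: "nat \<Rightarrow> real" where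
  "m_tilde l = (\<Sum>t\<in>{2^l..<2^(l+1)}. c_tilde t) / 2 ^ l"

end

theory Submission
  imports Defs "HOL-Real_Asymp.Real_Asymp"
begin

lemma bsum_rec: "bsum n = n mod 2 + bsum (n div 2)"
  by (cases "n = 0") (simp_all add: bsum.simps[of n] bsum.simps[of 0])

lemma bsum_0[simp]: "bsum 0 = 0"
  by (simp add: bsum.simps)

lemma bsum_1[simp]: "bsum (Suc 0) = 1"
  using bsum_rec[of 1] by simp

lemma bsum_add_pow: "r < 2^L \<Longrightarrow> bsum (2^L*q + r) = bsum q + bsum r"
proof (induction L arbitrary: r)
  case 0 then show ?case by simp
next
  case (Suc L)
  have r2: "r div 2 < 2^L" using Suc.prems by (simp add: less_mult_imp_div_less mult.commute)
  have "bsum (2^Suc L*q + r) = (2^Suc L*q + r) mod 2 + bsum ((2^Suc L*q+r) div 2)" by (rule bsum_rec)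
  also have "(2^Suc L*q + r) mod 2 = r mod 2" by (simp add: mult.assoc)
  also have "(2^Suc L*q + r) div 2 = 2^L*q + r div 2" by simp
  also have "bsum (2^L*q + r div 2) = bsum q + bsum (r div 2)" using Suc.IH r2 by blast
  finally show ?case using bsum_rec[of r] by simp
qed

lemma bsum_bound: "n < 2^L \<Longrightarrow> bsum n \<le> L"
proof (induction L arbitrary: n)
  case 0 then show ?case by simp
next
  case (Suc L)
  have "n div 2 < 2^L" using Suc.prems by (simp add: less_mult_imp_div_less mult.commute)
  then have "bsum (n div 2) \<le> L" using Suc.IH by blast
  then show ?case using bsum_rec[of n] by simp
qed

lemma sum_split_mult:
  fixes f :: "nat \<Rightarrow> 'a::comm_monoid_add"
  shows "(\<Sum>n<a*b. f n) = (\<Sum>q<b. \<Sum>r<a. f (a*q+r))"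
proof (induction b)
  case 0 show ?case by simp
next
  case (Suc b)
  have e: "{..<a*Suc b} = {..<a*b} \<union> {a*b..<a*b+a}" by auto
  have "(\<Sum>n<a*Suc b. f n) = (\<Sum>n<a*b. f n) + (\<Sum>n\<in>{a*b..<a*b+a}. f n)"
    unfolding e by (rule sum.union_disjoint) auto
  also have "(\<Sum>n\<in>{a*b..<a*b+a}. f n) = (\<Sum>r<a. f (a*b+r))"
    using sum.shift_bounds_nat_ivl[of f 0 "a*b" a] by (simp add: atLeast0LessThan add.commute)
  finally show ?case using Suc.IH by simp
qed

lemma sum_bsum:
  fixes f :: "nat \<Rightarrow> real"
  shows "(\<Sum>n<2^L. f (bsum n)) = (\<Sum>i\<le>L. real (L choose i) * f i)"
proof (induction L arbitrary: f)
  case 0 then show ?case by simp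
next
  case (Suc L)
  have "(\<Sum>n<2^Suc L. f (bsum n)) = (\<Sum>q<2. \<Sum>r<2^L. f (bsum (2^L*q+r)))"
    using sum_split_mult[of "\<lambda>n. f (bsum n)" "2^L" 2] by (simp add: mult.commute)
  also have "\<dots> = (\<Sum>r<2^L. f (bsum (2^L*0+r))) + (\<Sum>r<2^L. f (bsum (2^L*1+r)))"
    by (simp add: numeral_2_eq_2)
  also have "\<dots> = (\<Sum>r<2^L. f (bsum r)) + (\<Sum>r<2^L. f (bsum r + 1))"
  proof -
    have "bsum (1::nat) = 1" by (simp add: bsum.simps[of 1])
    then have h: "\<And>r. r \<in> {..<2^L} \<Longrightarrow> f (bsum (2^L*1+r)) = f (bsum r + 1)"
      using bsum_add_pow[of _ L 1] by simp
    have "(\<Sum>r<2^L. f (bsum (2^L*1+r))) = (\<Sum>r<2^L. f (bsum r + 1))"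
      by (rule sum.cong) (use h in auto)
    then show ?thesis by simp
  qed
  also have "\<dots> = (\<Sum>i\<le>L. real (L choose i) * f i) + (\<Sum>i\<le>L. real (L choose i) * f (i+1))"
    using Suc.IH[of f] Suc.IH[of "\<lambda>i. f (i+1)"] by simp
  also have "\<dots> = (\<Sum>i\<le>Suc L. real (Suc L choose i) * f i)"
  proof -
    have e1: "(\<Sum>i\<le>Suc L. real (Suc L choose i) * f i) = real (Suc L choose 0) * f 0 + (\<Sum>i\<le>L. real (Suc L choose Suc i) * f (Suc i))"
      by (rule sum.atMost_Suc_shift)
    have e2: "(\<Sum>i\<le>L. real (Suc L choose Suc i) * f (Suc i)) = (\<Sum>i\<le>L. real (L choose i) * f (Suc i)) + (\<Sum>i\<le>L. real (L choose Suc i) * f (Suc i))"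
      by (simp add: sum.distrib algebra_simps)
    have e3: "(\<Sum>i\<le>Suc L. real (L choose i) * f i) = real (L choose 0) * f 0 + (\<Sum>i\<le>L. real (L choose Suc i) * f (Suc i))"
      by (rule sum.atMost_Suc_shift)
    have e4: "(\<Sum>i\<le>Suc L. real (L choose i) * f i) = (\<Sum>i\<le>L. real (L choose i) * f i)"
      by simp
    show ?thesis using e1 e2 e3 e4 by simp
  qed
  finally show ?case .
qed

fun vv :: "nat \<Rightarrow> nat" where
  "vv q = (if q mod 2 = 1 then Suc (vv (q div 2)) else 0)"

declare vv.simps[simp del]

lemma vv_bsum: "bsum (q+1) + vv q = bsum q + 1"
proof (induction q rule: vv.induct)
  case (1 q)
  show ?case
  proof (cases "q mod 2 = 1")
    case True
    have "(q+1) div 2 = q div 2 + 1" "(q+1) mod 2 = 0" using True by presburger+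
    then have "bsum (q+1) = bsum (q div 2 + 1)"
      using bsum_rec[of "q+1"] by simp
    moreover have "bsum q = 1 + bsum (q div 2)" using bsum_rec[of q] True by simp
    moreover have "vv q = Suc (vv (q div 2))" using True by (simp add: vv.simps)
    ultimately show ?thesis using 1 True by simp
  next
    case False
    then have "q mod 2 = 0" by simp
    then have "bsum (q+1) = 1 + bsum (q div 2)" "bsum q = bsum (q div 2)"
      using bsum_rec[of "q+1"] bsum_rec[of q] by auto
    moreover have "vv q = 0" using False by (simp add: vv.simps)
    ultimately show ?thesis by simp
  qed
qed

lemma vv_ge_iff: "j \<le> vv q \<longleftrightarrow> q mod 2^j = 2^j - 1"
proof (induction j arbitrary: q)
  case 0 then show ?case by simp
next
  case (Suc j)
  have m: "q mod 2^Suc j = 2 * ((q div 2) mod 2^j) + q mod 2"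
    using mod_mult2_eq[of q 2 "2^j"] by simp
  have "Suc j \<le> vv q \<longleftrightarrow> q mod 2 = 1 \<and> j \<le> vv (q div 2)"
    by (simp add: vv.simps[of q])
  also have "\<dots> \<longleftrightarrow> q mod 2 = 1 \<and> (q div 2) mod 2^j = 2^j - 1" using Suc.IH by simp
  also have "\<dots> \<longleftrightarrow> q mod 2^Suc j = 2^Suc j - 1"
  proof
    assume a: "q mod 2 = 1 \<and> (q div 2) mod 2^j = 2^j - 1"
    have x: "(1::nat) \<le> 2^j" by simp
    have aux: "\<And>x::nat. 1 \<le> x \<Longrightarrow> Suc (2*(x - 1)) = 2*x - 1" by arith
    show "q mod 2^Suc j = 2^Suc j - 1" unfolding m using a aux[OF x] by simp
  next
    assume h: "q mod 2^Suc j = 2^Suc j - 1"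
    have aux: "\<And>a b x::nat. 2*a + b = 2*x - 1 \<Longrightarrow> b < 2 \<Longrightarrow> a < x \<Longrightarrow> b = 1 \<and> a = x - 1"
      by arith
    have "q mod 2 < 2" by simp
    moreover have "(q div 2) mod 2^j < 2^j" by simp
    moreover have "2 * ((q div 2) mod 2^j) + q mod 2 = 2 * 2^j - 1" using h unfolding m by simp
    ultimately show "q mod 2 = 1 \<and> (q div 2) mod 2^j = 2^j - 1" using aux by blast
  qed
  finally show ?case .
qed


lemma count_vv_ge:
  assumes "j \<le> K"
  shows "(\<Sum>q<(2::nat)^K. (if j \<le> vv q then 1 else 0::real)) = 2^(K-j)"
proof -
  have K: "(2::nat)^K = 2^j * 2^(K-j)" using assms by (simp add: power_add[symmetric])
  have "(\<Sum>q<(2::nat)^K. (if j \<le> vv q then 1 else 0::real))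
      = (\<Sum>q'<2^(K-j). \<Sum>c<2^j. (if j \<le> vv (2^j*q'+c) then 1 else 0::real))"
    unfolding K by (rule sum_split_mult)
  also have "\<dots> = (\<Sum>q'<(2::nat)^(K-j). \<Sum>c<(2::nat)^j. (if c = 2^j - 1 then 1 else 0::real))"
  proof (rule sum.cong[OF refl], rule sum.cong[OF refl])
    fix q' c assume "c \<in> {..<(2::nat)^j}"
    then have "(2^j*q'+c) mod 2^j = c" by simp
    then show "(if j \<le> vv (2^j*q'+c) then 1 else 0::real) = (if c = 2^j - 1 then 1 else 0)"
      by (simp add: vv_ge_iff)
  qed
  also have "\<dots> = (\<Sum>q'<(2::nat)^(K-j). (1::real))"
    by (intro sum.cong refl) (simp add: sum.delta)
  finally show ?thesis by simp
qed

lemma count_vv_le: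
  fixes T :: int
  assumes "T + 1 \<le> int K"
  shows "(\<Sum>q<(2::nat)^K. (if int (vv q) \<le> T then 1 else 0::real))
        = (if T \<ge> 0 then 2^K - 2^(K - nat (T+1)) else 0)"
proof (cases "T \<ge> 0")
  case False then show ?thesis by simp
next
  case True
  have j: "nat (T+1) \<le> K" using assms by simp
  have "(\<Sum>q<(2::nat)^K. (if int (vv q) \<le> T then 1 else 0::real))
       = (\<Sum>q<(2::nat)^K. 1 - (if nat (T+1) \<le> vv q then 1 else 0::real))"
    by (intro sum.cong refl) (use True in auto)
  also have "\<dots> = 2^K - 2^(K - nat (T+1))"
    by (simp add: sum_subtractf count_vv_ge[OF j])
  finally show ?thesis using True by simp
qed

lemma count_vv_half_le:
  fixes T :: int
  assumes "T + 2 \<le> int K"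
  shows "(\<Sum>q<(2::nat)^K. (if int (vv (q div 2)) \<le> T then 1 else 0::real))
        = (if T \<ge> 0 then 2^K - 2^(K - nat (T+1)) else 0)"
proof (cases "T \<ge> 0")
  case False then show ?thesis by simp
next
  case True
  have K1: "K \<ge> 1" using assms True by simp
  have K: "(2::nat)^K = 2 * 2^(K-1)" using K1 by (simp add: power_eq_if)
  have "(\<Sum>q<(2::nat)^K. (if int (vv (q div 2)) \<le> T then 1 else 0::real))
      = (\<Sum>q'<2^(K-1). \<Sum>c<2. (if int (vv ((2*q'+c) div 2)) \<le> T then 1 else 0::real))"
    unfolding K by (rule sum_split_mult)
  also have "\<dots> = (\<Sum>q'<2^(K-1). 2 * (if int (vv q') \<le> T then 1 else 0::real))"
  proof (intro sum.cong refl)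
    fix x :: nat
    have s2: "\<And>h::nat\<Rightarrow>real. (\<Sum>c<(2::nat). h c) = h 0 + h 1" by (simp add: eval_nat_numeral)
    have "(2*x+0) div 2 = x" "(2*x+1) div 2 = x" by simp_all
    then show "(\<Sum>c<2. (if int (vv ((2*x+c) div 2)) \<le> T then 1 else 0::real)) = 2 * (if int (vv x) \<le> T then 1 else 0::real)"
      by (subst s2) simp
  qed
  also have "\<dots> = 2 * (\<Sum>q'<2^(K-1). (if int (vv q') \<le> T then 1 else 0::real))"
    by (simp add: sum_distrib_left)
  also have "\<dots> = 2 * (if T \<ge> 0 then 2^(K-1) - 2^(K - 1 - nat (T+1)) else 0)"
    using assms by (subst count_vv_le) auto
  also have "\<dots> = (if T \<ge> 0 then 2^K - 2^(K - nat (T+1)) else 0)"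
  proof -
    have "nat (T+1) < K" if "T \<ge> 0" using assms that by simp
    then have "T \<ge> 0 \<Longrightarrow> (2::real) * 2^(K - 1 - nat (T+1)) = 2^(K - nat (T+1))"
      by (metis Suc_diff_Suc diff_Suc_1 diff_Suc_eq_diff_pred power_Suc)
    moreover have "(2::real) * 2^(K-1) = 2^K" using K1 by (simp add: power_eq_if)
    ultimately show ?thesis by (simp add: algebra_simps)
  qed
  finally show ?thesis .
qed

lemma vv_le_mod:
  fixes T :: int
  assumes "T + 1 \<le> int K"
  shows "int (vv (q mod 2^K)) \<le> T \<longleftrightarrow> int (vv q) \<le> T"
proof (cases "T \<ge> 0")
  case False then show ?thesis by simp
next
  case True
  define j where "j = nat (T+1)"
  have jK: "j \<le> K" using assms True by (simp add: j_def)
  have "int (vv x) \<le> T \<longleftrightarrow> \<not> j \<le> vv x" for x using True by (auto simp add: j_def nat_le_iff)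
  moreover have "(q mod 2^K) mod 2^j = q mod 2^j"
    by (rule mod_mod_cancel) (use jK in \<open>simp add: le_imp_power_dvd\<close>)
  ultimately show ?thesis by (simp add: vv_ge_iff)
qed

lemma mod_pow_div2: "K \<ge> 1 \<Longrightarrow> ((q::nat) mod 2^K) div 2 = (q div 2) mod 2^(K-1)"
proof -
  assume "K \<ge> 1"
  then have "(2::nat)^K = 2 * 2^(K-1)" by (simp add: power_eq_if)
  then have "q mod 2^K = 2 * ((q div 2) mod 2^(K-1)) + q mod 2"
    using mod_mult2_eq[of q 2 "2^(K-1)"] by simp
  then show ?thesis by simp
qed

lemma periodic_density:
  assumes P: "P > 0" and per: "\<And>n. n \<in> A \<longleftrightarrow> n + P \<in> A"
  shows "asymp_density A = real (card {n\<in>A. n<P}) / real P"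
proof -
  define f where "f N = card {n\<in>A. n<N}" for N
  define c where "c = f P"
  have step: "f (N + P) = f N + c" for N
  proof -
    have e: "{n\<in>A. n<N+P} = {n\<in>A. n<P} \<union> (\<lambda>n. n+P) ` {n\<in>A. n<N}"
    proof (rule set_eqI, rule iffI)
      fix x assume x: "x \<in> {n\<in>A. n<N+P}"
      show "x \<in> {n\<in>A. n<P} \<union> (\<lambda>n. n+P) ` {n\<in>A. n<N}"
      proof (cases "x < P")
        case True then show ?thesis using x by auto
      next
        case False
        then have "x - P \<in> A" using x per[of "x-P"] by simp
        moreover have "x = (x - P) + P" using False by simp
        ultimately show ?thesis using x False by (intro UnI2 image_eqI[of _ _ "x-P"]) auto
      qed
    next
      fix x assume "x \<in> {n\<in>A. n<P} \<union> (\<lambda>n. n+P) ` {n\<in>A. n<N}"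
      then show "x \<in> {n\<in>A. n<N+P}" using per by auto
    qed
    have "card ({n\<in>A. n<P} \<union> (\<lambda>n. n+P) ` {n\<in>A. n<N}) = card {n\<in>A. n<P} + card ((\<lambda>n. n+P) ` {n\<in>A. n<N})"
      by (rule card_Un_disjoint) auto
    also have "card ((\<lambda>n. n+P) ` {n\<in>A. n<N}) = card {n\<in>A. n<N}"
      by (rule card_image) (auto simp: inj_on_def)
    finally show ?thesis unfolding f_def c_def e by simp
  qed
  have mult: "f (k*P + m) = k*c + f m" for k m
  proof (induction k)
    case 0 then show ?case by simp
  next
    case (Suc k)
    have "f (Suc k * P + m) = f ((k*P+m) + P)" by (simp add: ac_simps)
    also have "\<dots> = f (k*P+m) + c" by (rule step)
    finally show ?case using Suc.IH by simp
  qed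
  have fmono: "f m \<le> f m'" if "m \<le> m'" for m m'
    unfolding f_def by (rule card_mono) (use that in auto)
  have bound: "\<bar>real (f N) / real N - real c / real P\<bar> \<le> real c / real N" if N: "N > 0" for N
  proof -
    have N_eq: "N = (N div P)*P + N mod P" by simp
    have fN: "f N = (N div P)*c + f (N mod P)" by (subst N_eq) (rule mult)
    have le: "f (N mod P) \<le> c" unfolding c_def using fmono[of "N mod P" P] P by simp
    have rN: "real N = real (N div P) * real P + real (N mod P)"
      by (metis N_eq of_nat_add of_nat_mult)
    have rm: "real (N mod P) \<le> real P" using P by simp
    have "real (f N) - real c * real N / real P = real (f (N mod P)) - real c * real (N mod P) / real P"
      using P by (simp add: fN rN field_simps)
    moreover have "0 \<le> real c * real (N mod P) / real P" by simp
    moreover have "real c * real (N mod P) / real P \<le> real c"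
      using rm P by (simp add: divide_le_eq mult_left_mono)
    ultimately have "\<bar>real (f N) - real c * real N / real P\<bar> \<le> real c"
      using le by linarith
    then have "\<bar>real (f N) - real c * real N / real P\<bar> / real N \<le> real c / real N"
      using N by (simp add: divide_right_mono)
    moreover have "\<bar>real (f N) - real c * real N / real P\<bar> / real N = \<bar>real (f N) / real N - real c / real P\<bar>"
      using N by (simp add: abs_div_pos[symmetric] field_simps)
    ultimately show ?thesis by simp
  qed
  have "(\<lambda>N. real (f N) / real N) \<longlonglongrightarrow> real c / real P"
  proof (rule tendsto_sandwich[where f = "\<lambda>N. real c / real P - real c / real N" and h = "\<lambda>N. real c / real P + real c / real N"])
    show "\<forall>\<^sub>F N in sequentially. real c / real P - real c / real N \<le> real (f N) / real N"
      using eventually_gt_at_top[of 0] proof eventually_elim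
        case (elim N) from bound[OF elim] show ?case unfolding abs_le_iff by linarith
      qed
    show "\<forall>\<^sub>F N in sequentially. real (f N) / real N \<le> real c / real P + real c / real N"
      using eventually_gt_at_top[of 0] proof eventually_elim
        case (elim N) from bound[OF elim] show ?case unfolding abs_le_iff by linarith
      qed
    have "(\<lambda>N. real c / real N) \<longlonglongrightarrow> 0"
      by (intro tendsto_divide_0[OF tendsto_const] filterlim_at_top_imp_at_infinity filterlim_real_sequentially)
    then show "(\<lambda>N. real c / real P - real c / real N) \<longlonglongrightarrow> real c / real P"
      and "(\<lambda>N. real c / real P + real c / real N) \<longlonglongrightarrow> real c / real P"
      using tendsto_add[OF tendsto_const, of _ 0 sequentially "real c / real P"]
            tendsto_diff[OF tendsto_const, of _ 0 sequentially "real c / real P"] by auto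
  qed
  then show ?thesis unfolding asymp_density_def f_def c_def by (rule limI)
qed


definition pp :: "int \<Rightarrow> real" where
  "pp x = (if x \<ge> -1 then 1 - 1 / 2 ^ nat (x+2) else 0)"

lemma bsum_plus2: "int (bsum (q+2)) - int (bsum q) = 1 - int (vv (q div 2))"
proof -
  have a: "q + 2 = 2^1 * (q div 2 + 1) + q mod 2" by simp
  have b: "q = 2^1 * (q div 2) + q mod 2" by simp
  have "bsum (q+2) = bsum (q div 2 + 1) + bsum (q mod 2)"
    by (subst a, rule bsum_add_pow) simp
  moreover have "bsum q = bsum (q div 2) + bsum (q mod 2)"
    by (subst b, rule bsum_add_pow) simp
  moreover have "bsum (q div 2 + 1) + vv (q div 2) = bsum (q div 2) + 1" by (rule vv_bsum)
  ultimately show ?thesis by simp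
qed

lemma bsum_plus1: "int (bsum (q+1)) - int (bsum q) = 1 - int (vv q)"
  using vv_bsum[of q] by simp

lemma ct_formula:
  fixes l t' :: nat and c :: int
  assumes t': "t' < 2^l" and c: "c \<ge> 0"
  shows "asymp_density {n. int (bsum (n + (2^l + t'))) - int (bsum n) \<ge> c}
       = (\<Sum>r<2^l. pp (int (bsum ((r+t') mod 2^l)) - int (bsum r) - c)) / 2^l"
proof -
  define K where "K = l + 3"
  define D where "D r = int (bsum ((r+t') mod 2^l)) - int (bsum r)" for r
  define T where "T r = D r + 1 - c" for r
  define w where "w r q = (if r + t' < 2^l then vv q else vv (q div 2))" for r q
  define \<Phi> where "\<Phi> r q \<longleftrightarrow> int (w r q) \<le> T r" for r q
  have Dle: "D r \<le> int l" for r
  proof -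
    have "bsum ((r+t') mod 2^l) \<le> l" by (rule bsum_bound) simp
    then show ?thesis unfolding D_def by simp
  qed
  have key1: "int (bsum (n + (2^l + t'))) - int (bsum n) \<ge> c \<longleftrightarrow> \<Phi> (n mod 2^l) (n div 2^l)" for n
  proof -
    define q where "q = n div 2^l"
    define r where "r = n mod 2^l"
    have r: "r < 2^l" unfolding r_def by simp
    have n: "n = 2^l * q + r" unfolding q_def r_def by simp
    have sn: "bsum n = bsum q + bsum r" unfolding n using r by (rule bsum_add_pow)
    show ?thesis
    proof (cases "r + t' < 2^l")
      case True
      have "n + (2^l + t') = 2^l * (q+1) + (r + t')" unfolding n by (simp add: algebra_simps)
      then have "bsum (n + (2^l + t')) = bsum (2^l * (q+1) + (r + t'))" by (rule arg_cong)
      also have "\<dots> = bsum (q+1) + bsum (r+t')" by (rule bsum_add_pow) (use True in simp)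
      finally have "bsum (n + (2^l + t')) = bsum (q+1) + bsum (r+t')" .
      moreover have "(r+t') mod 2^l = r+t'" using True by simp
      ultimately have "int (bsum (n + (2^l + t'))) - int (bsum n) = 1 - int (vv q) + D r"
        using bsum_plus1[of q] sn unfolding D_def by simp
      then show ?thesis unfolding \<Phi>_def w_def T_def using True by (simp add: q_def r_def[symmetric]) linarith
    next
      case False
      define y where "y = r + t' - 2^l"
      have y: "y < 2^l" using r t' unfolding y_def by simp
      have "n + (2^l + t') = 2^l * (q+2) + y" unfolding n y_def using False by (simp add: algebra_simps)
      then have "bsum (n + (2^l + t')) = bsum (2^l * (q+2) + y)" by (rule arg_cong)
      also have "\<dots> = bsum (q+2) + bsum y" by (rule bsum_add_pow) (use y in simp)
      finally have "bsum (n + (2^l + t')) = bsum (q+2) + bsum y" .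
      moreover have "(r+t') mod 2^l = y"
      proof -
        have "r + t' = y + 2^l * 1" using False unfolding y_def by simp
        then show ?thesis using y by simp
      qed
      ultimately have "int (bsum (n + (2^l + t'))) - int (bsum n) = 1 - int (vv (q div 2)) + D r"
        using bsum_plus2[of q] sn unfolding D_def by simp
      then show ?thesis unfolding \<Phi>_def w_def T_def using False by (simp add: q_def r_def[symmetric]) linarith
    qed
  qed
  have key2: "\<Phi> r q \<longleftrightarrow> \<Phi> r (q mod 2^K)" for r q
  proof (cases "r + t' < 2^l")
    case True
    have "T r + 1 \<le> int K" using Dle[of r] c unfolding T_def K_def by simp
    then show ?thesis unfolding \<Phi>_def w_def using True vv_le_mod by simp
  next
    case False
    have "T r + 1 \<le> int (K - 1)" using Dle[of r] c unfolding T_def K_def by simp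
    moreover have "(q mod 2^K) div 2 = (q div 2) mod 2^(K-1)" by (rule mod_pow_div2) (simp add: K_def)
    ultimately show ?thesis unfolding \<Phi>_def w_def using False vv_le_mod by simp
  qed
  define A where "A = {n. int (bsum (n + (2^l + t'))) - int (bsum n) \<ge> c}"
  define P :: nat where "P = 2^l * 2^K"
  have A: "n \<in> A \<longleftrightarrow> \<Phi> (n mod 2^l) ((n div 2^l) mod 2^K)" for n
    unfolding A_def using key1 key2 by simp
  have per: "n \<in> A \<longleftrightarrow> n + P \<in> A" for n
  proof -
    have nP: "n + P = n + 2^K * 2^l" unfolding P_def by (simp add: mult.commute)
    have "(n + P) mod 2^l = n mod 2^l" unfolding nP by (rule mod_mult_self1)
    moreover have "(n + P) div 2^l = n div 2^l + 2^K" unfolding nP by (subst div_mult_self1) simp_all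
    ultimately show ?thesis unfolding A by simp
  qed
  have "asymp_density A = real (card {n\<in>A. n<P}) / real P"
    by (rule periodic_density[OF _ per]) (simp add: P_def)
  also have "real (card {n\<in>A. n<P}) = (\<Sum>n<P. if n \<in> A then 1 else 0::real)"
  proof -
    have "{n\<in>A. n<P} = {..<P} \<inter> A" by auto
    then show ?thesis by (simp add: sum.If_cases)
  qed
  also have "\<dots> = (\<Sum>q<2^K. \<Sum>r<2^l. if 2^l*q+r \<in> A then 1 else 0::real)"
    unfolding P_def by (rule sum_split_mult)
  also have "\<dots> = (\<Sum>q<(2::nat)^K. \<Sum>r<(2::nat)^l. if \<Phi> r q then 1 else 0::real)"
  proof (intro sum.cong refl)
    fix q r assume q: "q \<in> {..<(2::nat)^K}" and r: "r \<in> {..<(2::nat)^l}"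
    have "(2^l*q+r) mod 2^l = r" "(2^l*q+r) div 2^l = q" using r by auto
    moreover have "q mod 2^K = q" using q by simp
    ultimately show "(if 2^l*q+r \<in> A then 1 else 0::real) = (if \<Phi> r q then 1 else 0)"
      unfolding A by simp
  qed
  also have "\<dots> = (\<Sum>r<(2::nat)^l. \<Sum>q<(2::nat)^K. if \<Phi> r q then 1 else 0::real)"
    by (rule sum.swap)
  also have "\<dots> = (\<Sum>r<(2::nat)^l. 2^K * pp (D r - c))"
  proof (intro sum.cong refl)
    fix r assume r: "r \<in> {..<(2::nat)^l}"
    have Tb: "T r + 2 \<le> int K" using Dle[of r] c unfolding T_def K_def by simp
    have ppT: "(if T r \<ge> 0 then 2^K - 2^(K - nat (T r+1)) else 0) = (2::real)^K * pp (D r - c)"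
    proof (cases "T r \<ge> 0")
      case True
      have "nat (T r + 1) \<le> K" using Tb by simp
      then have "(2::real)^(K - nat (T r+1)) = 2^K / 2^nat (T r+1)"
        by (simp add: power_diff)
      moreover have "nat (D r - c + 2) = nat (T r + 1)" unfolding T_def by (simp add: algebra_simps)
      ultimately show ?thesis using True unfolding pp_def T_def by (simp add: algebra_simps)
    next
      case False then show ?thesis unfolding pp_def T_def by simp
    qed
    show "(\<Sum>q<(2::nat)^K. if \<Phi> r q then 1 else 0::real) = 2^K * pp (D r - c)"
    proof (cases "r + t' < 2^l")
      case True
      then have "(\<Sum>q<(2::nat)^K. if \<Phi> r q then 1 else 0::real) = (\<Sum>q<(2::nat)^K. if int (vv q) \<le> T r then 1 else 0::real)"
        unfolding \<Phi>_def w_def by simp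
      also have "\<dots> = (if T r \<ge> 0 then 2^K - 2^(K - nat (T r+1)) else 0)"
        by (rule count_vv_le) (use Tb in simp)
      finally show ?thesis using ppT by simp
    next
      case False
      then have "(\<Sum>q<(2::nat)^K. if \<Phi> r q then 1 else 0::real) = (\<Sum>q<(2::nat)^K. if int (vv (q div 2)) \<le> T r then 1 else 0::real)"
        unfolding \<Phi>_def w_def by simp
      also have "\<dots> = (if T r \<ge> 0 then 2^K - 2^(K - nat (T r+1)) else 0)"
        by (rule count_vv_half_le) (use Tb in simp)
      finally show ?thesis using ppT by simp
    qed
  qed
  finally have "asymp_density A = (\<Sum>r<(2::nat)^l. 2^K * pp (D r - c)) / real P" .
  also have "\<dots> = (\<Sum>r<(2::nat)^l. pp (D r - c)) / 2^l"
    unfolding P_def by (simp add: sum_distrib_left[symmetric])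
  finally show ?thesis unfolding A_def D_def .
qed


lemma ct_explicit:
  assumes "t' < 2^l"
  shows "c_t (2^l + t') = (\<Sum>r<2^l. pp (int (bsum ((r+t') mod 2^l)) - int (bsum r))) / 2^l"
proof -
  have "{n. bsum n \<le> bsum (n + (2^l + t'))} = {n. int (bsum (n + (2^l + t'))) - int (bsum n) \<ge> 0}"
    by auto
  then show ?thesis unfolding c_t_def using ct_formula[OF assms, of 0] by simp
qed

lemma ctilde_explicit:
  assumes "t' < 2^l"
  shows "c_tilde (2^l + t') = (\<Sum>r<2^l. pp (int (bsum ((r+t') mod 2^l)) - int (bsum r) - 1)) / 2^l"
proof -
  have "{n. bsum n < bsum (n + (2^l + t'))} = {n. int (bsum (n + (2^l + t'))) - int (bsum n) \<ge> 1}"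
    by auto
  then show ?thesis unfolding c_tilde_def using ct_formula[OF assms, of 1] by simp
qed

lemma sum_mod_reindex:
  fixes g :: "nat \<Rightarrow> real"
  assumes r: "r < M"
  shows "(\<Sum>t<M. g ((r+t) mod M)) = (\<Sum>y<M. g y)"
proof (rule sum.reindex_bij_witness[where i = "\<lambda>y. (y + M - r) mod M" and j = "\<lambda>t. (r+t) mod M"])
  fix a assume a: "a \<in> {..<M}"
  have "((r + a) mod M + M - r) mod M = ((r + a) mod M + (M - r)) mod M" using r by simp
  also have "\<dots> = (r + a + (M - r)) mod M" by (simp add: mod_add_left_eq)
  also have "r + a + (M - r) = a + M" using r by simp
  finally show "((r + a) mod M + M - r) mod M = a" using a by simp
next
  fix a assume a: "a \<in> {..<M}"
  have "(r + (a + M - r) mod M) mod M = (r + (a + M - r)) mod M" by (simp add: mod_add_right_eq)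
  also have "r + (a + M - r) = a + M" using r by simp
  finally show "(r + (a + M - r) mod M) mod M = a" using a by simp
qed (use r in auto)

lemma sum_choose_rev:
  fixes G :: "nat \<Rightarrow> real"
  shows "(\<Sum>i\<le>l. real (l choose i) * G i) = (\<Sum>i\<le>l. real (l choose i) * G (l - i))"
proof -
  have "(\<Sum>i\<le>l. real (l choose i) * G i) = (\<Sum>i\<le>l. real (l choose (l - i)) * G (l - i))"
    using sum.atLeastAtMost_rev[of "\<lambda>i. real (l choose i) * G i" 0 l] by (simp add: atLeast0AtMost)
  also have "\<dots> = (\<Sum>i\<le>l. real (l choose i) * G (l - i))"
    by (intro sum.cong refl) (simp add: binomial_symmetric[symmetric])
  finally show ?thesis .
qed

lemma double_bsum:
  fixes F :: "int \<Rightarrow> real"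
  shows "(\<Sum>r<(2::nat)^l. \<Sum>y<(2::nat)^l. F (int (bsum y) - int (bsum r)))
       = (\<Sum>i\<le>2*l. real ((2*l) choose i) * F (int i - int l))"
proof -
  have "(\<Sum>r<(2::nat)^l. \<Sum>y<(2::nat)^l. F (int (bsum y) - int (bsum r)))
      = (\<Sum>r<(2::nat)^l. \<Sum>j\<le>l. real (l choose j) * F (int j - int (bsum r)))"
    by (rule sum.cong[OF refl], rule sum_bsum[of "\<lambda>j. F (int j - int (bsum _))"])
  also have "\<dots> = (\<Sum>j\<le>l. real (l choose j) * (\<Sum>r<(2::nat)^l. F (int j - int (bsum r))))"
    unfolding sum_distrib_left by (rule sum.swap)
  also have "\<dots> = (\<Sum>j\<le>l. real (l choose j) * (\<Sum>r<(2::nat)^l. F (int j + int (bsum r) - int l)))"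
  proof (rule sum.cong[OF refl])
    fix j
    have "(\<Sum>r<(2::nat)^l. F (int j - int (bsum r))) = (\<Sum>i\<le>l. real (l choose i) * F (int j - int i))"
      by (rule sum_bsum)
    also have "\<dots> = (\<Sum>i\<le>l. real (l choose i) * F (int j - int (l - i)))"
      by (rule sum_choose_rev)
    also have "\<dots> = (\<Sum>i\<le>l. real (l choose i) * F (int j + int i - int l))"
      by (intro sum.cong refl) (simp add: of_nat_diff algebra_simps)
    also have "\<dots> = (\<Sum>r<(2::nat)^l. F (int j + int (bsum r) - int l))"
      by (rule sum_bsum[symmetric])
    finally show "real (l choose j) * (\<Sum>r<(2::nat)^l. F (int j - int (bsum r))) = real (l choose j) * (\<Sum>r<(2::nat)^l. F (int j + int (bsum r) - int l))" by simp
  qed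
  also have "\<dots> = (\<Sum>r<(2::nat)^l. \<Sum>j\<le>l. real (l choose j) * F (int j + int (bsum r) - int l))"
    unfolding sum_distrib_left by (rule sum.swap)
  also have "\<dots> = (\<Sum>r<(2::nat)^l. \<Sum>y<(2::nat)^l. F (int (bsum y) + int (bsum r) - int l))"
    by (rule sum.cong[OF refl], rule sum_bsum[symmetric])
  also have "\<dots> = (\<Sum>y<(2::nat)^l. \<Sum>r<(2::nat)^l. F (int (bsum (2^l*y+r)) - int l))"
  proof -
    have "\<And>y r. r < 2^l \<Longrightarrow> bsum (2^l*y+r) = bsum y + bsum r" by (rule bsum_add_pow)
    then have eq: "(\<Sum>y<(2::nat)^l. \<Sum>r<(2::nat)^l. F (int (bsum (2^l*y+r)) - int l))
       = (\<Sum>y<(2::nat)^l. \<Sum>r<(2::nat)^l. F (int (bsum y) + int (bsum r) - int l))"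
      by (intro sum.cong refl) simp
    show ?thesis by (rule trans[OF sum.swap eq[symmetric]])
  qed
  also have "\<dots> = (\<Sum>z<(2::nat)^l*2^l. F (int (bsum z) - int l))"
    by (rule sum_split_mult[symmetric])
  also have "\<dots> = (\<Sum>z<(2::nat)^(2*l). F (int (bsum z) - int l))"
    by (simp add: power_add[symmetric] mult_2)
  also have "\<dots> = (\<Sum>i\<le>2*l. real ((2*l) choose i) * F (int i - int l))"
    by (rule sum_bsum)
  finally show ?thesis .
qed

lemma mlam_binsum:
  "m_lam l = (\<Sum>i\<le>2*l. real ((2*l) choose i) * pp (int i - int l)) / 4^l"
proof -
  have "(\<Sum>t\<in>{2^l..<2^(l+1)}. c_t t) = (\<Sum>t'<(2::nat)^l. c_t (2^l + t'))"
    using sum.shift_bounds_nat_ivl[of c_t 0 "2^l" "2^l"] by (simp add: atLeast0LessThan add.commute mult_2)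
  also have "\<dots> = (\<Sum>t'<(2::nat)^l. (\<Sum>r<2^l. pp (int (bsum ((r+t') mod 2^l)) - int (bsum r))) / 2^l)"
    by (intro sum.cong refl ct_explicit) simp
  also have "\<dots> = (\<Sum>r<(2::nat)^l. \<Sum>t'<(2::nat)^l. pp (int (bsum ((r+t') mod 2^l)) - int (bsum r))) / 2^l"
    unfolding sum_divide_distrib[symmetric] by (subst sum.swap) (rule refl)
  also have "(\<Sum>r<(2::nat)^l. \<Sum>t'<(2::nat)^l. pp (int (bsum ((r+t') mod 2^l)) - int (bsum r)))
     = (\<Sum>r<(2::nat)^l. \<Sum>y<(2::nat)^l. pp (int (bsum y) - int (bsum r)))"
    by (intro sum.cong refl sum_mod_reindex[of _ _ "\<lambda>y. pp (int (bsum y) - int (bsum _))"]) simp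
  also have "\<dots> = (\<Sum>i\<le>2*l. real ((2*l) choose i) * pp (int i - int l))"
    by (rule double_bsum)
  finally have e: "(\<Sum>t\<in>{2^l..<2^(l+1)}. c_t t) = (\<Sum>i\<le>2*l. real ((2*l) choose i) * pp (int i - int l)) / 2^l" .
  have f: "(4::real)^l = 2^l * 2^l" using power_mult_distrib[of "2::real" 2 l] by simp
  show ?thesis unfolding m_lam_def e f by (simp add: divide_divide_eq_left)
qed

lemma mtilde_binsum:
  "m_tilde l = (\<Sum>i\<le>2*l. real ((2*l) choose i) * pp (int i - int l - 1)) / 4^l"
proof -
  have "(\<Sum>t\<in>{2^l..<2^(l+1)}. c_tilde t) = (\<Sum>t'<(2::nat)^l. c_tilde (2^l + t'))"
    using sum.shift_bounds_nat_ivl[of c_tilde 0 "2^l" "2^l"] by (simp add: atLeast0LessThan add.commute mult_2)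
  also have "\<dots> = (\<Sum>t'<(2::nat)^l. (\<Sum>r<2^l. pp (int (bsum ((r+t') mod 2^l)) - int (bsum r) - 1)) / 2^l)"
    by (intro sum.cong refl ctilde_explicit) simp
  also have "\<dots> = (\<Sum>r<(2::nat)^l. \<Sum>t'<(2::nat)^l. pp (int (bsum ((r+t') mod 2^l)) - int (bsum r) - 1)) / 2^l"
    unfolding sum_divide_distrib[symmetric] by (subst sum.swap) (rule refl)
  also have "(\<Sum>r<(2::nat)^l. \<Sum>t'<(2::nat)^l. pp (int (bsum ((r+t') mod 2^l)) - int (bsum r) - 1))
     = (\<Sum>r<(2::nat)^l. \<Sum>y<(2::nat)^l. pp (int (bsum y) - int (bsum r) - 1))"
    by (intro sum.cong refl sum_mod_reindex[of _ _ "\<lambda>y. pp (int (bsum y) - int (bsum _) - 1)"]) simp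
  also have "\<dots> = (\<Sum>i\<le>2*l. real ((2*l) choose i) * pp (int i - int l - 1))"
    using double_bsum[of "\<lambda>x. pp (x - 1)" l] by simp
  finally have e: "(\<Sum>t\<in>{2^l..<2^(l+1)}. c_tilde t) = (\<Sum>i\<le>2*l. real ((2*l) choose i) * pp (int i - int l - 1)) / 2^l" .
  have f: "(4::real)^l = 2^l * 2^l" using power_mult_distrib[of "2::real" 2 l] by simp
  show ?thesis unfolding m_tilde_def e f by (simp add: divide_divide_eq_left)
qed


definition cb :: "nat \<Rightarrow> real" where "cb l = real ((2*l) choose l) / 4^l"
definition qq :: "nat \<Rightarrow> nat \<Rightarrow> real" where "qq l k = real ((2*l) choose (l+k)) / real ((2*l) choose l)"
definition XX :: "nat \<Rightarrow> real" where "XX l = (\<Sum>k\<le>l. qq l k / 2^k)"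

lemma choose_step: "(n choose Suc k) * Suc k = (n - k) * (n choose k)"
proof (cases n)
  case 0 then show ?thesis by simp
next
  case (Suc m)
  have "Suc m * (m choose k) = (Suc m choose Suc k) * Suc k" by (rule Suc_times_binomial_eq)
  moreover have "(Suc m - k) * (Suc m choose k) = Suc m * (m choose k)" using binomial_absorb_comp[of "Suc m" k] by simp
  ultimately show ?thesis using Suc by simp
qed

lemma sum_split_le2:
  fixes g :: "nat \<Rightarrow> real"
  shows "(\<Sum>i\<le>2*l. g i) = (\<Sum>i<l. g i) + (\<Sum>k\<le>l. g (l+k))"
proof -
  have e: "{..2*l} = {..<l} \<union> {l..2*l}" by auto
  have "(\<Sum>i\<le>2*l. g i) = (\<Sum>i<l. g i) + (\<Sum>i\<in>{l..2*l}. g i)"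
    unfolding e by (rule sum.union_disjoint) auto
  also have "(\<Sum>i\<in>{l..2*l}. g i) = (\<Sum>k\<le>l. g (l+k))"
    using sum.shift_bounds_cl_nat_ivl[of g 0 l l] by (simp add: atLeast0AtMost add.commute mult_2)
  finally show ?thesis .
qed

lemma half_sum: "(\<Sum>k\<le>l. real ((2*l) choose (l+k))) = (4^l + real ((2*l) choose l)) / 2"
proof -
  have "(\<Sum>i\<le>2*l. real ((2*l) choose i)) = 4^l"
  proof -
    have "(\<Sum>i\<le>2*l. ((2*l) choose i)) = 2^(2*l)" by (rule choose_row_sum)
    then have "(\<Sum>i\<le>2*l. real ((2*l) choose i)) = 2^(2*l)" by (metis of_nat_numeral of_nat_power of_nat_sum)
    then show ?thesis by (simp add: power_mult)
  qed
  moreover have "(\<Sum>i\<le>2*l. real ((2*l) choose i)) = (\<Sum>i<l. real ((2*l) choose i)) + (\<Sum>k\<le>l. real ((2*l) choose (l+k)))"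
    by (rule sum_split_le2)
  moreover have "(\<Sum>i<l. real ((2*l) choose i)) = (\<Sum>k\<le>l. real ((2*l) choose (l+k))) - real ((2*l) choose l)"
  proof -
    have "(\<Sum>i<l. real ((2*l) choose i)) = (\<Sum>i<l. real ((2*l) choose (l - Suc i)))"
      using sum.atLeastLessThan_rev[of "\<lambda>i. real ((2*l) choose i)" 0 l] by (simp add: atLeast0LessThan)
    also have "\<dots> = (\<Sum>i<l. real ((2*l) choose (l + Suc i)))"
    proof (intro sum.cong refl)
      fix i assume "i \<in> {..<l}"
      then have "2*l - (l - Suc i) = l + Suc i" by simp
      then show "real ((2*l) choose (l - Suc i)) = real ((2*l) choose (l + Suc i))"
        using binomial_symmetric[of "l - Suc i" "2*l"] by simp
    qed
    also have "(\<Sum>k\<le>l. real ((2*l) choose (l+k))) = real ((2*l) choose l) + (\<Sum>i<l. real ((2*l) choose (l + Suc i)))"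
      by (simp only: lessThan_Suc_atMost[symmetric] sum.lessThan_Suc_shift) simp
    ultimately show ?thesis by simp
  qed
  ultimately show ?thesis by simp
qed

lemma pp_nat: "pp (int k) = 1 - 1/2^(k+2)"
  unfolding pp_def by (simp add: nat_add_distrib)

lemma pp_nat1: "pp (int k - 1) = 1 - 1/2^(k+1)"
proof -
  have "nat (int k - 1 + 2) = k + 1" by simp
  then show ?thesis unfolding pp_def by simp
qed

lemma pp_neg: "x \<le> -2 \<Longrightarrow> pp x = 0"
  unfolding pp_def by simp

lemma pp_m1: "pp (-1) = 1/2"
  unfolding pp_def by simp

lemma central_pos: "real ((2*l) choose l) > 0"
  by simp

lemma sum_C_over2: "(\<Sum>k\<le>l. real ((2*l) choose (l+k)) / 2^k) = real ((2*l) choose l) * XX l"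
  unfolding XX_def qq_def by (simp add: sum_distrib_left)

lemma choose_lm1: "l \<ge> 1 \<Longrightarrow> real ((2*l) choose (l-1)) = real ((2*l) choose l) * l / (l+1)"
proof -
  assume l: "l \<ge> 1"
  have e1: "Suc (l-1) = l" using l by simp
  have e2: "2*l - (l-1) = l + 1" using l by simp
  have "((2*l) choose Suc (l-1)) * Suc (l-1) = (2*l - (l-1)) * ((2*l) choose (l-1))" by (rule choose_step)
  then have "((2*l) choose l) * l = (l + 1) * ((2*l) choose (l-1))" unfolding e1 e2 .
  then have "real ((2*l) choose l) * real l = real (l+1) * real ((2*l) choose (l-1))"
    by (metis of_nat_mult)
  then show ?thesis by (simp add: field_simps)
qed

lemma mlam_closed:
  assumes l: "l \<ge> 1"
  shows "m_lam l = 1/2 + cb l * (1/2 + l/(2*(l+1)) - XX l / 4)"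
proof -
  obtain m where m: "l = Suc m" using l by (cases l) auto
  define C where "C = real ((2*l) choose l)"
  have "(\<Sum>i\<le>2*l. real ((2*l) choose i) * pp (int i - int l))
      = (\<Sum>i<l. real ((2*l) choose i) * pp (int i - int l)) + (\<Sum>k\<le>l. real ((2*l) choose (l+k)) * pp (int (l+k) - int l))"
    by (rule sum_split_le2)
  also have "(\<Sum>i<l. real ((2*l) choose i) * pp (int i - int l)) = real ((2*l) choose (l-1)) / 2"
  proof -
    have "(\<Sum>i<m. real ((2*l) choose i) * pp (int i - int l)) = 0"
      by (intro sum.neutral ballI) (simp add: pp_neg m)
    moreover have "pp (int m - int l) = 1/2" using pp_m1 m by simp
    ultimately show ?thesis unfolding m by simp
  qed
  also have "(\<Sum>k\<le>l. real ((2*l) choose (l+k)) * pp (int (l+k) - int l))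
     = (\<Sum>k\<le>l. real ((2*l) choose (l+k))) - (\<Sum>k\<le>l. real ((2*l) choose (l+k)) / 2^k) / 4"
    by (simp add: pp_nat sum_subtractf sum_divide_distrib algebra_simps)
  also have "\<dots> = (4^l + C) / 2 - C * XX l / 4"
    unfolding half_sum sum_C_over2 C_def ..
  finally have S: "(\<Sum>i\<le>2*l. real ((2*l) choose i) * pp (int i - int l)) = C * l / (l+1) / 2 + ((4^l + C) / 2 - C * XX l / 4)"
    using choose_lm1[OF l] unfolding C_def by simp
  have cb: "cb l = C / 4^l" unfolding cb_def C_def ..
  have gen: "\<And>F::real. F > 0 \<Longrightarrow> (C * l / (l+1) / 2 + ((F + C) / 2 - C * XX l / 4)) / F = 1/2 + (C / F) * (1/2 + l/(2*(l+1)) - XX l / 4)"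
  proof -
    fix F :: real assume F: "F > 0"
    have l1: "real l + 1 > 0" by simp
    show "(C * l / (l+1) / 2 + ((F + C) / 2 - C * XX l / 4)) / F = 1/2 + (C / F) * (1/2 + l/(2*(l+1)) - XX l / 4)"
    proof -
      have d: "F * 16 + F * (real l * 16) > 0" using F by (simp add: add_pos_nonneg)
      then have d': "F * 16 + F * (real l * 16) \<noteq> 0" by simp
      show ?thesis using F l1 d' by (simp add: field_simps)
    qed
  qed
  show ?thesis unfolding mlam_binsum S cb using gen[of "4^l"] by simp
qed

lemma mtilde_closed:
  shows "m_tilde l = 1/2 + cb l * (1/2 - XX l / 2)"
proof -
  define C where "C = real ((2*l) choose l)"
  have "(\<Sum>i\<le>2*l. real ((2*l) choose i) * pp (int i - int l - 1))
      = (\<Sum>i<l. real ((2*l) choose i) * pp (int i - int l - 1)) + (\<Sum>k\<le>l. real ((2*l) choose (l+k)) * pp (int (l+k) - int l - 1))"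
    by (rule sum_split_le2)
  also have "(\<Sum>i<l. real ((2*l) choose i) * pp (int i - int l - 1)) = 0"
    by (intro sum.neutral ballI) (simp add: pp_neg)
  also have "(\<Sum>k\<le>l. real ((2*l) choose (l+k)) * pp (int (l+k) - int l - 1))
     = (\<Sum>k\<le>l. real ((2*l) choose (l+k))) - (\<Sum>k\<le>l. real ((2*l) choose (l+k)) / 2^k) / 2"
    by (simp add: pp_nat1 sum_subtractf sum_divide_distrib algebra_simps)
  also have "\<dots> = (4^l + C) / 2 - C * XX l / 2"
    unfolding half_sum sum_C_over2 C_def ..
  finally have S: "(\<Sum>i\<le>2*l. real ((2*l) choose i) * pp (int i - int l - 1)) = (4^l + C) / 2 - C * XX l / 2"
    by simp
  have cb: "cb l = C / 4^l" unfolding cb_def C_def ..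
  have p: "(4::real)^l > 0" by simp
  have "((4^l + C) / 2 - C * XX l / 2) / 4^l = (4^l / 4^l) / 2 + (C / 4^l) * (1/2 - XX l / 2)"
    by (simp add: diff_divide_distrib add_divide_distrib algebra_simps)
  then show ?thesis unfolding mtilde_binsum S cb using p by simp
qed

lemma qq_0: "qq l 0 = 1"
  unfolding qq_def by simp

lemma qq_nonneg: "qq l k \<ge> 0"
  unfolding qq_def by simp

lemma qq_le1: "qq l k \<le> 1"
proof -
  have "(2*l) choose (l+k) \<le> (2*l) choose ((2*l) div 2)" by (rule binomial_maximum)
  then have "real ((2*l) choose (l+k)) \<le> real ((2*l) choose l)" by simp
  then show ?thesis unfolding qq_def by (simp add: divide_le_eq)
qed

lemma qq_big: "k > l \<Longrightarrow> qq l k = 0"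
  unfolding qq_def by simp

lemma qq_step:
  assumes "k \<le> l"
  shows "qq l (Suc k) = qq l k * ((real l - real k) / (real l + real k + 1))"
proof -
  have "((2*l) choose Suc (l+k)) * Suc (l+k) = (2*l - (l+k)) * ((2*l) choose (l+k))" by (rule choose_step)
  moreover have "2*l - (l+k) = l - k" by simp
  ultimately have "real ((2*l) choose Suc (l+k)) * real (Suc (l+k)) = real (l - k) * real ((2*l) choose (l+k))"
    by (metis of_nat_mult)
  moreover have "real (l - k) = real l - real k" using assms by simp
  ultimately have "real ((2*l) choose (l + Suc k)) = real ((2*l) choose (l+k)) * ((real l - real k) / (real l + real k + 1))"
    by (simp add: field_simps)
  then show ?thesis unfolding qq_def by simp
qed

lemma geo_sum: "(\<Sum>k\<le>n. 1 / 2^k :: real) = 2 - 1/2^n"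
  by (induction n) (simp_all add: field_simps)

lemma XX_lt2: "XX l < 2"
proof -
  have "XX l \<le> (\<Sum>k\<le>l. 1 / 2^k)"
    unfolding XX_def by (intro sum_mono divide_right_mono qq_le1) simp
  also have "\<dots> < 2" unfolding geo_sum by simp
  finally show ?thesis .
qed

lemma XX_gt1: "l \<ge> 1 \<Longrightarrow> XX l > 1"
proof -
  assume l: "l \<ge> 1"
  have "qq l 1 > 0"
  proof -
    have "(2*l) choose (l+1) > 0" using l by simp
    then show ?thesis unfolding qq_def by simp
  qed
  have "XX l = (\<Sum>k\<le>l. qq l k / 2^k)" unfolding XX_def ..
  also have "\<dots> \<ge> (\<Sum>k\<in>{0,1}. qq l k / 2^k)"
    by (rule sum_mono2) (use l in \<open>auto intro: divide_nonneg_pos qq_nonneg\<close>)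
  finally show ?thesis using \<open>qq l 1 > 0\<close> by (simp add: qq_0)
qed

lemma cb_pos: "cb l > 0"
  unfolding cb_def by simp

theorem ineq_part: "l \<ge> 1 \<Longrightarrow> m_tilde l < 1/2 \<and> 1/2 < m_lam l"
proof -
  assume l: "l \<ge> 1"
  have "m_tilde l < 1/2" unfolding mtilde_closed using XX_gt1[OF l] cb_pos[of l]
    by (simp add: mult_pos_neg)
  moreover have "1/2 < m_lam l"
  proof -
    have "0 \<le> real l/(2*(real l+1))" by simp
    then have "0 < 1/2 + real l/(2*(real l+1)) - XX l / 4" using XX_lt2[of l]
      by linarith
    then show ?thesis unfolding mlam_closed[OF l] using cb_pos[of l] by simp
  qed
  ultimately show ?thesis by simp
qed


lemma poly1: "(x - y^2)*(x - y) - (x - (y+1)^2)*(x+y+1) = 2*y^3 + 3*y^2 + 3*y + (1::real)"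
  by algebra

lemma poly2: "(x^2 - (y+1)^2*x + (y+1)^4)*(x+y+1) - (x^2 - y^2*x + y^4)*(x-y) = x*(2*y^3+3*y^2+y) + (y+1)^5 + (y::real)^5"
  by algebra

lemma qq_lower_aux:
  assumes l: "l \<ge> 1"
  shows "qq l k \<ge> (real l - real k ^ 2) / real l"
proof (induction k)
  case 0 then show ?case using l by (simp add: qq_0)
next
  case (Suc k)
  define x where "x = real l"
  define y where "y = real k"
  have x: "x \<ge> 1" using l unfolding x_def by simp
  have y: "y \<ge> 0" unfolding y_def by simp
  show ?case
  proof (cases "k < l")
    case False
    then have "real l \<le> real k" by simp
    also have "\<dots> \<le> real (Suc k)" by simp
    also have "\<dots> \<le> real (Suc k) ^ 2" using mult_right_mono[of 1 "real (Suc k)" "real (Suc k)"] by (simp add: power2_eq_square)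
    finally have "(real l - real (Suc k) ^ 2) / real l \<le> 0" using l by (simp add: divide_nonpos_pos)
    then show ?thesis using qq_nonneg[of l "Suc k"] by linarith
  next
    case True
    then have yx: "y < x" unfolding x_def y_def by simp
    have d: "x + y + 1 > 0" using x y by simp
    have r: "(x - y) / (x + y + 1) \<ge> 0" using yx y by simp
    have "qq l (Suc k) = qq l k * ((x - y) / (x + y + 1))" unfolding x_def y_def using True by (simp add: qq_step)
    also have "\<dots> \<ge> ((x - y^2)/x) * ((x - y) / (x + y + 1))"
      using mult_right_mono[OF Suc.IH r] unfolding x_def y_def by simp
    moreover have "((x - y^2)/x) * ((x - y) / (x + y + 1)) = ((x - y^2)*(x - y)) / (x*(x+y+1))"
      by simp
    moreover have "((x - (y+1)^2)*(x+y+1)) / (x*(x+y+1)) \<le> ((x - y^2)*(x - y)) / (x*(x+y+1))"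
    proof (rule divide_right_mono)
      show "(x - (y+1)^2)*(x+y+1) \<le> (x - y^2)*(x - y)" using poly1[of x y] y
        by (smt (verit) zero_le_power mult_nonneg_nonneg)
    qed (use x d in simp)
    moreover have "((x - (y+1)^2)*(x+y+1)) / (x*(x+y+1)) = (x - (y+1)^2) / x"
      using d by simp
    ultimately have "(x - (y+1)^2) / x \<le> qq l (Suc k)" by linarith
    moreover have ys: "real (Suc k) = y + 1" unfolding y_def by simp
    ultimately show ?thesis unfolding ys x_def[symmetric] by simp
  qed
qed

lemma qq_lower:
  assumes l: "l \<ge> 1"
  shows "qq l k \<ge> 1 - real k ^ 2 / real l"
  using qq_lower_aux[OF l, of k] l by (simp add: diff_divide_distrib)

lemma qq_upper_aux:
  assumes l: "l \<ge> 1"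
  shows "qq l k \<le> (real l ^ 2 - real k ^ 2 * real l + real k ^ 4) / real l ^ 2"
proof (induction k)
  case 0 then show ?case using l by (simp add: qq_0)
next
  case (Suc k)
  define x where "x = real l"
  define y where "y = real k"
  have x: "x \<ge> 1" using l unfolding x_def by simp
  have y: "y \<ge> 0" unfolding y_def by simp
  show ?case
  proof (cases "k < l")
    case False
    then have "qq l (Suc k) = 0" by (simp add: qq_big)
    moreover have "x^2 - (y+1)^2 * x + (y+1)^4 > 0"
    proof -
      define z where "z = (y+1)^2"
      have z4: "(y+1)^4 = z^2" unfolding z_def by (simp flip: power_mult)
      have "x^2 - z * x + z^2 = (x - z/2)^2 + 3/4 * z^2"
        by (simp add: power2_eq_square algebra_simps)
      then have "x^2 - (y+1)^2 * x + (y+1)^4 = (x - z/2)^2 + 3/4 * (y+1)^4"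
        unfolding z4 by (simp add: z_def)
      moreover have "(y+1)^4 > 0" using y by simp
      moreover have "(x - z/2)^2 \<ge> 0" by simp
      ultimately show ?thesis by linarith
    qed
    ultimately have "0 \<le> (x^2 - (y+1)^2 * x + (y+1)^4) / x^2 - qq l (Suc k)" by simp
    moreover have ys: "real (Suc k) = y + 1" unfolding y_def by simp
    ultimately show ?thesis unfolding ys x_def[symmetric] by simp
  next
    case True
    then have yx: "y < x" unfolding x_def y_def by simp
    have d: "x + y + 1 > 0" using x y by simp
    have r: "(x - y) / (x + y + 1) \<ge> 0" using yx y by simp
    have "qq l (Suc k) = qq l k * ((x - y) / (x + y + 1))" unfolding x_def y_def using True by (simp add: qq_step)
    also have "\<dots> \<le> ((x^2 - y^2*x + y^4)/x^2) * ((x - y) / (x + y + 1))"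
      using mult_right_mono[OF Suc.IH r] unfolding x_def y_def by simp
    also have "((x^2 - y^2*x + y^4)/x^2) * ((x - y) / (x + y + 1)) = ((x^2 - y^2*x + y^4)*(x-y)) / (x^2*(x+y+1))"
      by simp
    also have "\<dots> \<le> ((x^2 - (y+1)^2*x + (y+1)^4)*(x+y+1)) / (x^2*(x+y+1))"
    proof (rule divide_right_mono)
      have "0 \<le> x*(2*y^3+3*y^2+y) + (y+1)^5 + y^5" using x y by simp
      then show "(x^2 - y^2*x + y^4)*(x-y) \<le> (x^2 - (y+1)^2*x + (y+1)^4)*(x+y+1)"
        using poly2[of x y] by linarith
    qed (use x d in simp)
    also have "\<dots> = (x^2 - (y+1)^2*x + (y+1)^4) / x^2"
      using d by simp
    finally have "qq l (Suc k) \<le> (x^2 - (y+1)^2*x + (y+1)^4) / x^2" .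
    moreover have ys: "real (Suc k) = y + 1" unfolding y_def by simp
    ultimately show ?thesis unfolding ys x_def[symmetric] by (simp add: algebra_simps)
  qed
qed

lemma qq_upper:
  assumes l: "l \<ge> 1"
  shows "qq l k \<le> 1 - real k ^ 2 / real l + real k ^ 4 / real l ^ 2"
proof -
  have "(real l ^ 2 - real k ^ 2 * real l + real k ^ 4) / real l ^ 2 = 1 - real k ^ 2 / real l + real k ^ 4 / real l ^ 2"
    using l by (simp add: field_simps power2_eq_square)
  then show ?thesis using qq_upper_aux[OF l, of k] by simp
qed


lemma pow_step:
  fixes P f :: "nat \<Rightarrow> real"
  assumes "P (Suc n) = 2 * P n - f (Suc n)"
  shows "c - P n / 2^n + f (Suc n) / 2^(Suc n) = c - P (Suc n) / 2^(Suc n)"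
proof -
  have "P n / 2^n = 2 * P n / 2^(Suc n)" by simp
  then show ?thesis unfolding assms by (simp add: diff_divide_distrib)
qed

lemma sum_pow_gen:
  fixes P f :: "nat \<Rightarrow> real"
  assumes "\<And>n. P (Suc n) = 2 * P n - f (Suc n)" and "f 0 = c - P 0"
  shows "(\<Sum>k\<le>n. f k / 2^k) = c - P n / 2^n"
proof (induction n)
  case 0 then show ?case using assms(2) by simp
next
  case (Suc n)
  then show ?case using pow_step[of P n f c, OF assms(1)] by simp
qed

lemma sum_k2: "(\<Sum>k\<le>n. real k ^ 2 / 2^k) = 6 - (real n ^ 2 + 4 * real n + 6) / 2^n"
  by (rule sum_pow_gen[where P = "\<lambda>n. real n ^ 2 + 4 * real n + 6" and f = "\<lambda>k. real k ^ 2"])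
     (simp_all add: power2_eq_square algebra_simps)

lemma sum_k4: "(\<Sum>k\<le>n. real k ^ 4 / 2^k) = 150 - (real n ^ 4 + 8 * real n ^ 3 + 36 * real n ^ 2 + 104 * real n + 150) / 2^n"
proof (rule sum_pow_gen[where P = "\<lambda>n. real n ^ 4 + 8 * real n ^ 3 + 36 * real n ^ 2 + 104 * real n + 150" and f = "\<lambda>k. real k ^ 4"])
  fix n
  show "real (Suc n) ^ 4 + 8 * real (Suc n) ^ 3 + 36 * real (Suc n) ^ 2 + 104 * real (Suc n) + 150 =
    2 * (real n ^ 4 + 8 * real n ^ 3 + 36 * real n ^ 2 + 104 * real n + 150) - real (Suc n) ^ 4"
    unfolding of_nat_Suc by algebra
qed simp

definition YY :: "nat \<Rightarrow> real" where
  "YY l = 2 - 1/2^l - (6 - (real l ^ 2 + 4 * real l + 6) / 2^l) / real l"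

lemma XX_YY:
  assumes l: "l \<ge> 1"
  shows "\<bar>XX l - YY l\<bar> \<le> 150 / real l ^ 2"
proof -
  have lp: "real l > 0" using l by simp
  have t: "(1 - real k ^ 2 / real l) / 2^k = 1/2^k - (real k ^ 2 / 2^k) / real l" for k
    using lp by (simp add: field_simps)
  have "(\<Sum>k\<le>l. (1 - real k ^ 2 / real l) / 2^k) = (\<Sum>k\<le>l. 1/2^k) - (\<Sum>k\<le>l. real k ^ 2 / 2^k) / real l"
    unfolding t by (simp add: sum_subtractf sum_divide_distrib)
  then have "YY l = (\<Sum>k\<le>l. (1 - real k ^ 2 / real l) / 2^k)"
    unfolding YY_def geo_sum sum_k2 by simp
  then have "XX l - YY l = (\<Sum>k\<le>l. (qq l k - (1 - real k ^ 2 / real l)) / 2^k)"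
    unfolding XX_def by (simp add: sum_subtractf diff_divide_distrib)
  then have "\<bar>XX l - YY l\<bar> \<le> (\<Sum>k\<le>l. \<bar>qq l k - (1 - real k ^ 2 / real l)\<bar> / 2^k)"
    by (simp add: sum_abs[THEN order_trans] abs_divide)
  also have "\<dots> \<le> (\<Sum>k\<le>l. (real k ^ 4 / real l ^ 2) / 2^k)"
  proof (intro sum_mono divide_right_mono)
    fix k
    show "\<bar>qq l k - (1 - real k ^ 2 / real l)\<bar> \<le> real k ^ 4 / real l ^ 2"
      using qq_lower[OF l, of k] qq_upper[OF l, of k] by simp
  qed simp
  also have "\<dots> = (\<Sum>k\<le>l. real k ^ 4 / 2^k) / real l ^ 2"
    by (simp add: sum_divide_distrib mult.commute)
  also have "\<dots> \<le> 150 / real l ^ 2"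
    unfolding sum_k4 by (intro divide_right_mono) simp_all
  finally show ?thesis .
qed


lemma cb_0: "cb 0 = 1" unfolding cb_def by simp

lemma cb_Suc: "cb (Suc n) = cb n * (2*real n + 1) / (2*real n + 2)"
proof -
  have a: "Suc (Suc (2*n)) * (Suc (2*n) choose n) = (Suc (Suc (2*n)) choose Suc n) * Suc n" by (rule Suc_times_binomial_eq)
  have b: "Suc (2*n) * ((2*n) choose n) = (Suc (2*n) choose Suc n) * Suc n" by (rule Suc_times_binomial_eq)
  have c: "(Suc (2*n) choose Suc n) = (Suc (2*n) choose n)"
    using binomial_symmetric[of n "Suc (2*n)"] by (simp add: Suc_diff_le)
  define A where "A = real (Suc (Suc (2*n)) choose Suc n)"
  define B where "B = real (Suc (2*n) choose n)"
  define C where "C = real ((2*n) choose n)"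
  have a': "real (Suc (Suc (2*n))) * B = A * real (Suc n)"
    unfolding A_def B_def of_nat_mult[symmetric] using a by (rule arg_cong)
  have b': "real (Suc (2*n)) * C = B * real (Suc n)"
    unfolding B_def C_def of_nat_mult[symmetric] c[symmetric] using b by (rule arg_cong)
  have rs: "real (Suc (Suc (2*n))) = 2 * (real n + 1)" "real (Suc (2*n)) = 2 * real n + 1" "real (Suc n) = real n + 1"
    by simp_all
  have np: "real n + 1 > 0" by simp
  have "A * (real n + 1) = (2 * B) * (real n + 1)" using a' unfolding rs by (simp add: algebra_simps)
  then have "A = 2 * B" using np by simp
  moreover have "B = (2*real n + 1) * C / (real n + 1)" using b' np unfolding rs by (simp add: field_simps)
  ultimately have "A = 2 * (2*real n + 1) * C / (real n + 1)" by simp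
  have e2: "2 * Suc n = Suc (Suc (2*n))" by simp
  have h1: "cb (Suc n) = A / (4 * 4^n)" unfolding cb_def A_def e2 by simp
  have h2: "cb n = C / 4^n" unfolding cb_def C_def ..
  have gen: "\<And>F D::real. F \<noteq> 0 \<Longrightarrow> D \<noteq> 0 \<Longrightarrow> (2 * (2*real n + 1) * C / D) / (4 * F) = C / F * (2*real n + 1) / (2*D)"
    by (simp add: field_simps)
  have "cb (Suc n) = (2 * (2*real n + 1) * C / (real n + 1)) / (4 * 4^n)"
    unfolding h1 \<open>A = 2 * (2*real n + 1) * C / (real n + 1)\<close> ..
  also have "\<dots> = C / 4^n * (2*real n + 1) / (2*(real n + 1))"
    by (rule gen) (use np in simp_all)
  finally show ?thesis unfolding h2 by (simp add: algebra_simps)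
qed

lemma wallis_cb: "(\<Prod>k=1..n. (4*real k^2)/(4*real k^2 - 1)) = 1/(cb n^2 * (2*real n + 1))"
proof (induction n)
  case 0 then show ?case by (simp add: cb_0)
next
  case (Suc n)
  have c: "cb n \<noteq> 0" using cb_pos[of n] by simp
  have gen: "\<And>c a b d::real. c\<noteq>0 \<Longrightarrow> a\<noteq>0 \<Longrightarrow> b\<noteq>0 \<Longrightarrow> d\<noteq>0 \<Longrightarrow>
       1/(c^2*a) * (b^2/(a*d)) = 1/((c*a/b)^2*d)"
    by (simp add: field_simps power2_eq_square)
  have e: "(4*real (Suc n)^2)/(4*real (Suc n)^2 - 1) = (2*real n+2)^2/((2*real n+1)*(2*real n+3))"
  proof -
    have "4*real (Suc n)^2 = (2*real n+2)^2" by (simp add: power2_eq_square algebra_simps)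
    moreover have "(2*real n+2)^2 - 1 = (2*real n+1)*(2*real n+3)" by (simp add: power2_eq_square algebra_simps)
    ultimately show ?thesis by simp
  qed
  have e3: "2 * real (Suc n) + 1 = 2*real n+3" by simp
  have "(\<Prod>k=1..Suc n. (4*real k^2)/(4*real k^2 - 1)) = (\<Prod>k=1..n. (4*real k^2)/(4*real k^2 - 1)) * ((4*real (Suc n)^2)/(4*real (Suc n)^2 - 1))"
    by (simp add: prod.cl_ivl_Suc)
  also have "\<dots> = 1/(cb n^2*(2*real n+1)) * ((2*real n+2)^2/((2*real n+1)*(2*real n+3)))"
    unfolding Suc.IH e ..
  also have "\<dots> = 1/((cb n*(2*real n+1)/(2*real n+2))^2*(2*real n+3))"
    by (rule gen) (use c in simp_all)
  also have "cb n*(2*real n+1)/(2*real n+2) = cb (Suc n)" unfolding cb_Suc ..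
  finally show ?case unfolding e3 .
qed

lemma cb2_lim: "(\<lambda>n. cb n^2 * (2*real n + 1)) \<longlonglongrightarrow> 2/pi"
proof -
  have "(\<lambda>n. inverse (\<Prod>k=1..n. (4*real k^2)/(4*real k^2 - 1))) \<longlonglongrightarrow> inverse (pi/2)"
    by (rule tendsto_inverse[OF wallis]) simp
  moreover have "inverse (\<Prod>k=1..n. (4*real k^2)/(4*real k^2 - 1)) = cb n^2 * (2*real n + 1)" for n
    unfolding wallis_cb by simp
  ultimately show ?thesis by simp
qed

lemma cb2_0: "(\<lambda>n. cb n^2) \<longlonglongrightarrow> 0"
proof -
  have "(\<lambda>n. 1 / (2*real n + 1)) \<longlonglongrightarrow> 0"
    by real_asymp
  from tendsto_mult[OF cb2_lim this] have "(\<lambda>n. cb n^2 * (2*real n + 1) * (1 / (2*real n + 1))) \<longlonglongrightarrow> 0"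
    by simp
  moreover have "cb n^2 * (2*real n + 1) * (1 / (2*real n + 1)) = cb n^2" for n
  proof -
    have "2*real n + 1 \<noteq> 0" by simp
    then show ?thesis by simp
  qed
  ultimately show ?thesis by simp
qed

definition phi :: "nat \<Rightarrow> real" where "phi n = cb n^2 * (real n + 1/4)"
definition UU :: "nat \<Rightarrow> real" where "UU m = cb (Suc m)^2 * (real (Suc m) + 1/4 + 1/(8*real (Suc m)))"

lemma phi_lim: "phi \<longlonglongrightarrow> 1/pi"
proof -
  have e: "phi = (\<lambda>n. cb n^2 * (2*real n + 1) / 2 - cb n^2 / 4)"
    by (rule ext) (simp add: phi_def algebra_simps)
  have "(\<lambda>n. cb n^2 * (2*real n + 1) / 2 - cb n^2 / 4) \<longlonglongrightarrow> (2/pi)/2 - 0/4"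
    by (intro tendsto_intros cb2_lim cb2_0) simp_all
  then show ?thesis unfolding e by simp
qed

lemma UU_lim: "UU \<longlonglongrightarrow> 1/pi"
proof -
  have e: "UU = (\<lambda>m. phi (Suc m) + cb (Suc m)^2 * (1/(8*real (Suc m))))"
    by (rule ext) (simp add: UU_def phi_def algebra_simps)
  have "(\<lambda>m. phi (Suc m) + cb (Suc m)^2 * (1/(8*real (Suc m)))) \<longlonglongrightarrow> 1/pi + 0 * 0"
  proof (intro tendsto_intros)
    show "(\<lambda>m. phi (Suc m)) \<longlonglongrightarrow> 1/pi" using phi_lim by (rule LIMSEQ_Suc)
    show "(\<lambda>m. cb (Suc m)^2) \<longlonglongrightarrow> 0" using cb2_0 by (rule LIMSEQ_Suc)
    show "(\<lambda>m. 1/(8*real (Suc m))) \<longlonglongrightarrow> 0" by real_asymp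
  qed
  then show ?thesis unfolding e by simp
qed

lemma frac_le_cross: "(b::real) > 0 \<Longrightarrow> d > 0 \<Longrightarrow> a*d \<le> c*b \<Longrightarrow> a/b \<le> c/d"
  by (simp add: field_simps)

lemma phi_Suc: "phi (Suc n) = phi n + cb n^2 / (4*(2*real n + 2)^2)"
proof -
  define x where "x = real n"
  define c where "c = cb n"
  define b where "b = 2*x+2"
  have x: "x \<ge> 0" unfolding x_def by simp
  have b: "b \<noteq> 0" unfolding b_def using x by simp
  have poly: "(2*x+1)^2*(x+5/4) = (x+1/4)*b^2 + 1/4"
    unfolding b_def by (simp add: power2_eq_square algebra_simps)
  have L: "(c*(2*x+1)/b)^2 * (x+1+1/4) * b^2 = c^2*((2*x+1)^2*(x+5/4))"
    using b by (simp add: power_divide power_mult_distrib)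
  have R: "(c^2*(x+1/4) + c^2/(4*b^2)) * b^2 = c^2*((x+1/4)*b^2 + 1/4)"
    using b by (simp add: algebra_simps power2_eq_square)
  have "(c*(2*x+1)/b)^2 * (x+1+1/4) * b^2 = (c^2*(x+1/4) + c^2/(4*b^2)) * b^2"
    unfolding L R poly ..
  then have "(c*(2*x+1)/b)^2 * (x+1+1/4) = c^2*(x+1/4) + c^2/(4*b^2)"
    using b by simp
  then show ?thesis unfolding phi_def cb_Suc c_def x_def b_def by simp
qed

lemma UU_step: "UU (Suc m) \<le> UU m"
proof -
  define M where "M = real (Suc m)"
  define N where "N = M + 1"
  define c where "c = cb (Suc m)"
  have M: "M \<ge> 1" unfolding M_def by simp
  have M0: "M \<noteq> 0" "N \<noteq> 0" using M unfolding N_def by simp_all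
  have e1: "real (Suc (Suc m)) = N" unfolding M_def N_def by simp
  have cS: "cb (Suc (Suc m)) = c * (2*M+1)/(2*N)"
    unfolding c_def M_def N_def cb_Suc[of "Suc m"] by (simp add: algebra_simps)
  have A: "N + 1/4 + 1/(8*N) = (8*N^2+2*N+1)/(8*N)"
    using M0 by (simp add: field_simps power2_eq_square)
  have B: "M + 1/4 + 1/(8*M) = (8*M^2+2*M+1)/(8*M)"
    using M0 by (simp add: field_simps power2_eq_square)
  have R: "(c*(2*M+1)/(2*N))^2 * ((8*N^2+2*N+1)/(8*N)) = c^2 * (((2*M+1)^2*(8*N^2+2*N+1)) / (32*N^3))"
    using M0 by (simp add: field_simps power2_eq_square power3_eq_cube)
  have poly: "(8*M^2+2*M+1) * (32*N^3) - ((2*M+1)^2*(8*N^2+2*N+1)) * (8*M) = 8*(6*M^2+9*M+4)"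
    unfolding N_def by (simp add: power2_eq_square power3_eq_cube algebra_simps)
  have le: "((2*M+1)^2*(8*N^2+2*N+1)) / (32*N^3) \<le> (8*M^2+2*M+1)/(8*M)"
  proof (rule frac_le_cross)
    show "0 < 32*N^3" "0 < 8*M" using M unfolding N_def by simp_all
    have "0 \<le> 8*(6*M^2+9*M+4)" using M by simp
    then show "((2*M+1)^2*(8*N^2+2*N+1)) * (8*M) \<le> (8*M^2+2*M+1) * (32*N^3)"
      using poly by linarith
  qed
  have "UU (Suc m) = c^2 * (((2*M+1)^2*(8*N^2+2*N+1)) / (32*N^3))"
    unfolding UU_def cS e1 A R[symmetric] ..
  also have "\<dots> \<le> c^2 * ((8*M^2+2*M+1)/(8*M))" by (rule mult_left_mono[OF le]) simp
  also have "\<dots> = UU m" unfolding UU_def M_def[symmetric] c_def[symmetric] B ..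
  finally show ?thesis .
qed

lemma phi_le: "phi n \<le> 1/pi"
  by (rule incseq_le[OF incseq_SucI phi_lim]) (simp add: phi_Suc)

lemma UU_ge: "1/pi \<le> UU m"
proof -
  have "antimono_on UNIV UU" by (rule decseq_SucI) (rule UU_step)
  then show ?thesis by (rule decseq_ge) (rule UU_lim)
qed

lemma cb_asymp:
  assumes n: "n \<ge> 1"
  shows "\<bar>cb n - 1 / sqrt (pi * (real n + 1/4))\<bar> \<le> 3 / (real n ^ 2 * sqrt (real n))"
proof -
  define x where "x = real n"
  define c where "c = cb n"
  have x: "x \<ge> 1" using n unfolding x_def by simp
  have c: "c > 0" using cb_pos unfolding c_def by simp
  have U: "1/pi \<le> c^2 * (x + 1/4 + 1/(8*x))"
    using UU_ge[of "n-1"] n unfolding UU_def c_def x_def by simp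
  have P: "c^2 * (x + 1/4) \<le> 1/pi" using phi_le[of n] unfolding phi_def c_def x_def by simp
  define Z where "Z = 1 / sqrt (pi * (x + 1/4))"
  have Zp: "Z > 0" unfolding Z_def using x by simp
  have Z2: "Z^2 = 1 / (pi * (x + 1/4))" unfolding Z_def using x by (simp add: power_divide)
  have x4: "x + 1/4 > 0" using x by simp
  have c2le: "c^2 \<le> 1 / x"
  proof -
    have "c^2 \<le> (1/pi) / (x + 1/4)" using P by (simp only: pos_le_divide_eq[OF x4])
    also have "\<dots> \<le> 1 / x"
    proof -
      have "pi * (x + 1/4) \<ge> 3 * (x + 1/4)" using mult_right_mono[of 3 pi "x+1/4"] pi_gt3 x4 by linarith
      moreover have "3 * (x + 1/4) \<ge> x" using x by simp
      ultimately have "pi * (x + 1/4) \<ge> x" by (rule order_trans[rotated])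
      then show ?thesis using x by (simp add: field_simps)
    qed
    finally show ?thesis .
  qed
  have "\<bar>c^2 - Z^2\<bar> \<le> c^2 / (8*x*(x+1/4))"
  proof -
    have gen: "\<And>y::real. y \<noteq> 0 \<Longrightarrow> c^2 - 1 / (pi * y) = (c^2*y - 1/pi) / y"
      by (simp add: field_simps)
    have "c^2 - Z^2 = (c^2*(x+1/4) - 1/pi) / (x + 1/4)" unfolding Z2 by (rule gen) (use x4 in simp)
    then have "\<bar>c^2 - Z^2\<bar> = \<bar>c^2*(x+1/4) - 1/pi\<bar> / (x + 1/4)" using x4 by (simp add: abs_divide)
    moreover have "c^2*(x+1/4) - 1/pi \<le> 0" using P by simp
    moreover have "c^2*(x+1/4) - 1/pi \<ge> -(c^2/(8*x))" using U by (simp add: algebra_simps)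
    moreover have "\<bar>c^2*(x+1/4) - 1/pi\<bar> \<le> c^2/(8*x)"
      unfolding abs_le_iff using calculation(2,3) by linarith
    then have "\<bar>c^2*(x+1/4) - 1/pi\<bar> / (x + 1/4) \<le> (c^2/(8*x)) / (x + 1/4)"
      by (rule divide_right_mono) (use x4 in simp)
    ultimately have "\<bar>c^2 - Z^2\<bar> \<le> (c^2/(8*x)) / (x + 1/4)" by simp
    also have "(c^2/(8*x)) / (x + 1/4) = c^2 / (8*x*(x+1/4))" by simp
    finally show ?thesis .
  qed
  also have "\<dots> \<le> (1/x) / (8*x*(x+1/4))" using c2le x by (intro divide_right_mono) simp_all
  also have "\<dots> \<le> 1 / x^3"
  proof -
    have a: "x^3 \<le> x*(8*x*(x+1/4))"
    proof -
      have "x*(8*x*(x+1/4)) - x^3 = 7*x^3 + 2*x^2" by (simp add: power2_eq_square power3_eq_cube algebra_simps)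
      moreover have "0 \<le> 7*x^3 + 2*x^2" using x by simp
      ultimately show ?thesis by linarith
    qed
    have "(1/x)/(8*x*(x+1/4)) = 1/(x*(8*x*(x+1/4)))" by simp
    also have "\<dots> \<le> 1/x^3" by (rule divide_left_mono[OF a]) (use x in simp_all)
    finally show ?thesis .
  qed
  finally have d2: "\<bar>c^2 - Z^2\<bar> \<le> 1 / x^3" .
  have f: "c^2 - Z^2 = (c - Z)*(c + Z)" by (simp add: power2_eq_square algebra_simps)
  have cZ: "c + Z > 0" using c Zp by simp
  have "\<bar>c^2 - Z^2\<bar> = \<bar>c - Z\<bar> * (c + Z)" unfolding f using cZ by (simp add: abs_mult)
  then have "\<bar>c - Z\<bar> = \<bar>c^2 - Z^2\<bar> / (c + Z)" using cZ by simp
  also have "\<dots> \<le> \<bar>c^2 - Z^2\<bar> / Z" using c Zp by (intro divide_left_mono) simp_all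
  also have "\<dots> \<le> (1 / x^3) / Z" using Zp d2 by (intro divide_right_mono) simp_all
  also have "(1 / x^3) / Z = sqrt (pi * (x + 1/4)) / x^3" unfolding Z_def by simp
  also have "\<dots> \<le> (3 * sqrt x) / x^3"
  proof (intro divide_right_mono)
    have "pi * (x + 1/4) \<le> 4 * (x + 1/4)" using mult_right_mono[of pi 4 "x+1/4"] pi_less_4 x4 by linarith
    moreover have "4 * (x + 1/4) \<le> 9 * x" using x by simp
    ultimately have "pi * (x + 1/4) \<le> 9 * x" by (rule order_trans)
    then have "sqrt (pi * (x + 1/4)) \<le> sqrt (9 * x)" by (rule real_sqrt_le_mono)
    also have "sqrt (9 * x) = 3 * sqrt x" by (simp add: real_sqrt_mult)
    finally show "sqrt (pi * (x + 1/4)) \<le> 3 * sqrt x" .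
  qed (use x in simp)
  also have "(3 * sqrt x) / x^3 = 3 / (x^2 * sqrt x)"
  proof -
    have sx: "sqrt x > 0" using x by simp
    have "x^3 = (x^2 * sqrt x) * sqrt x" using x by (simp add: power3_eq_cube power2_eq_square mult.assoc)
    then have "(3 * sqrt x) / x^3 = (3 * sqrt x) / ((x^2 * sqrt x) * sqrt x)" by simp
    also have "\<dots> = 3 / (x^2 * sqrt x)" using sx by simp
    finally show ?thesis .
  qed
  finally show ?thesis unfolding Z_def c_def x_def .
qed


lemma powr52: "(x::real) > 0 \<Longrightarrow> x powr (-5/2) = 1/(x^2 * sqrt x)"
proof -
  assume x: "x > 0"
  have "x powr 2 * x powr (1/2) = x powr (2 + 1/2)" by (rule powr_add[symmetric])
  moreover have "(2::real) + 1/2 = 5/2" by simp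
  moreover have "x powr 2 = x^2" using powr_realpow[OF x, of 2] by simp
  moreover have "x powr (1/2) = sqrt x" using x by (simp add: powr_half_sqrt)
  ultimately have a: "x powr (5/2) = x^2 * sqrt x" by simp
  have "(-5/2::real) = -(5/2)" by simp
  then have "x powr (-5/2) = 1 / x powr (5/2)" by (simp add: powr_minus_divide)
  then show ?thesis unfolding a .
qed

lemma XX_nonneg: "XX l \<ge> 0"
  unfolding XX_def by (intro sum_nonneg divide_nonneg_pos qq_nonneg) simp_all

lemma Z_le: "real l \<ge> 1 \<Longrightarrow> 1 / sqrt (pi * (real l + 1/4)) \<le> 1 / sqrt (real l)"
proof -
  assume l: "real l \<ge> 1"
  have "pi * (real l + 1/4) \<ge> 3 * (real l + 1/4)" using mult_right_mono[of 3 pi "real l + 1/4"] pi_gt3 l by linarith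
  moreover have "3 * (real l + 1/4) \<ge> real l" using l by simp
  ultimately have "real l \<le> pi * (real l + 1/4)" by (rule order_trans[rotated])
  then have "sqrt (real l) \<le> sqrt (pi * (real l + 1/4))" by (rule real_sqrt_le_mono)
  then show ?thesis using l by (intro divide_left_mono) simp_all
qed

lemma key_bound:
  assumes l: "l \<ge> 1" and A: "\<bar>A\<bar> \<le> 1" and B: "B \<ge> 0" and B1: "B \<le> 1"
  shows "\<bar>(cb l - 1 / sqrt (pi * (real l + 1/4))) * A - 1 / sqrt (pi * (real l + 1/4)) * (XX l - YY l) * B\<bar>
         \<le> 153 * real l powr (-5/2)"
proof -
  define x where "x = real l"
  have x: "x \<ge> 1" using l unfolding x_def by simp
  define Z where "Z = 1 / sqrt (pi * (x + 1/4))"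
  have Z0: "Z \<ge> 0" unfolding Z_def using x by simp
  have Z1: "Z \<le> 1 / sqrt x" unfolding Z_def x_def using Z_le x unfolding x_def by simp
  have s: "sqrt x > 0" using x by simp
  have F: "\<bar>cb l - Z\<bar> \<le> 3 / (x^2 * sqrt x)" using cb_asymp[OF l] unfolding Z_def x_def .
  have E: "\<bar>XX l - YY l\<bar> \<le> 150 / x^2" using XX_YY[OF l] unfolding x_def .
  have "\<bar>(cb l - Z) * A - Z * (XX l - YY l) * B\<bar> \<le> \<bar>cb l - Z\<bar> * \<bar>A\<bar> + Z * \<bar>XX l - YY l\<bar> * B"
    using Z0 B by (simp add: abs_mult abs_triangle_ineq4[THEN order_trans])
  also have "\<dots> \<le> 3 / (x^2 * sqrt x) * 1 + (1 / sqrt x) * (150 / x^2) * 1"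
    by (intro add_mono mult_mono F A E Z1 B1) (use Z0 B s x in simp_all)
  also have "\<dots> = 153 * (1 / (x^2 * sqrt x))" by (simp add: field_simps)
  also have "1 / (x^2 * sqrt x) = x powr (-5/2)" by (rule powr52[symmetric]) (use x in simp)
  finally show ?thesis unfolding Z_def x_def .
qed

definition tgt1 :: "nat \<Rightarrow> real" where
  "tgt1 l = 1/2 + 1 / (2 * sqrt (pi * real l)) + 15 / (16 * sqrt pi * real l powr (3/2))"
definition tgt2 :: "nat \<Rightarrow> real" where
  "tgt2 l = 1/2 - 1 / (2 * sqrt (pi * real l)) + 49 / (16 * sqrt pi * real l powr (3/2))"

lemma sqrt_split: "sqrt (pi * y) = sqrt pi * sqrt y"
  by (simp add: real_sqrt_mult)

lemma asym_m: "(\<lambda>l. m_lam l - tgt1 l) \<in> O(\<lambda>l. real l powr (-5/2))"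
proof -
  define s where "s = sqrt pi"
  have s: "s \<noteq> 0" unfolding s_def by simp
  define Zt where "Zt l = 1 / sqrt (real l + 1/4)" for l
  define K where "K l = 1/2 + real l/(2*(real l+1))" for l
  define A where "A l = 1 / (2 * sqrt (real l)) + 15 / (16 * real l powr (3/2))" for l
  define G1 where "G1 l = Zt l * (K l - (2 - 6/real l)/4) - A l" for l
  define G2 where "G2 l = Zt l * (YY l - (2 - 6/real l)) / 4" for l
  define H where "H l = (cb l - 1 / sqrt (pi * (real l + 1/4))) * (K l - XX l/4) - 1 / sqrt (pi * (real l + 1/4)) * (XX l - YY l) * (1/4)" for l
  have G1: "G1 \<in> O(\<lambda>l. real l powr (-5/2))"
    unfolding G1_def Zt_def K_def A_def by real_asymp
  have G2: "G2 \<in> O(\<lambda>l. real l powr (-5/2))"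
    unfolding G2_def Zt_def YY_def by real_asymp
  have G: "(\<lambda>l. (1/s) * (G1 l - G2 l)) \<in> O(\<lambda>l. real l powr (-5/2))"
    using s sum_in_bigo(2)[OF G1 G2] by simp
  have H: "H \<in> O(\<lambda>l. real l powr (-5/2))"
  proof (rule bigoI[where c = 153])
    show "\<forall>\<^sub>F l in sequentially. norm (H l) \<le> 153 * norm (real l powr (-5/2))"
      using eventually_ge_at_top[of 1]
    proof eventually_elim
      case (elim l)
      have K: "1/2 \<le> K l" "K l \<le> 1" unfolding K_def by (simp_all add: field_simps)
      have "\<bar>K l - XX l/4\<bar> \<le> 1" using K XX_nonneg[of l] XX_lt2[of l] by (simp add: abs_le_iff)
      then have "\<bar>H l\<bar> \<le> 153 * real l powr (-5/2)"
        unfolding H_def by (rule key_bound[OF elim]) simp_all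
      then show ?case by simp
    qed
  qed
  have bo: "(\<lambda>l. (1/s) * (G1 l - G2 l) + H l) \<in> O(\<lambda>l. real l powr (-5/2))" using G H by (rule sum_in_bigo)
  have ev: "\<forall>\<^sub>F l in sequentially. (1/s) * (G1 l - G2 l) + H l = m_lam l - tgt1 l"
    using eventually_ge_at_top[of 1]
  proof eventually_elim
    case (elim l)
    have z: "1 / sqrt (pi * (real l + 1/4)) = Zt l / s" unfolding Zt_def s_def sqrt_split by simp
    have l0: "sqrt (real l) \<noteq> 0" "real l powr (3/2) \<noteq> 0" using elim by simp_all
    have t1: "1 / (2 * sqrt (pi * real l)) = (1 / (2 * sqrt (real l))) / s"
      unfolding s_def sqrt_split using l0 by (simp add: field_simps)
    have t2: "15 / (16 * sqrt pi * real l powr (3/2)) = (15 / (16 * real l powr (3/2))) / s"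
      unfolding s_def using l0 by (simp add: field_simps)
    have t: "tgt1 l = 1/2 + A l / s"
      unfolding tgt1_def A_def t1 t2 by (simp add: add_divide_distrib)
    show ?case unfolding H_def z t mlam_closed[OF elim] K_def[symmetric] G1_def G2_def
      using s by (simp add: field_simps)
  qed
  show ?thesis using landau_o.big.in_cong[OF ev] bo by simp
qed

lemma asym_mt: "(\<lambda>l. m_tilde l - tgt2 l) \<in> O(\<lambda>l. real l powr (-5/2))"
proof -
  define s where "s = sqrt pi"
  have s: "s \<noteq> 0" unfolding s_def by simp
  define Zt where "Zt l = 1 / sqrt (real l + 1/4)" for l
  define A where "A l = - 1 / (2 * sqrt (real l)) + 49 / (16 * real l powr (3/2))" for l
  define G1 where "G1 l = Zt l * (1/2 - (2 - 6/real l)/2) - A l" for l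
  define G2 where "G2 l = Zt l * (YY l - (2 - 6/real l)) / 2" for l
  define H where "H l = (cb l - 1 / sqrt (pi * (real l + 1/4))) * (1/2 - XX l/2) - 1 / sqrt (pi * (real l + 1/4)) * (XX l - YY l) * (1/2)" for l
  have G1: "G1 \<in> O(\<lambda>l. real l powr (-5/2))"
    unfolding G1_def Zt_def A_def by real_asymp
  have G2: "G2 \<in> O(\<lambda>l. real l powr (-5/2))"
    unfolding G2_def Zt_def YY_def by real_asymp
  have G: "(\<lambda>l. (1/s) * (G1 l - G2 l)) \<in> O(\<lambda>l. real l powr (-5/2))"
    using s sum_in_bigo(2)[OF G1 G2] by simp
  have H: "H \<in> O(\<lambda>l. real l powr (-5/2))"
  proof (rule bigoI[where c = 153])
    show "\<forall>\<^sub>F l in sequentially. norm (H l) \<le> 153 * norm (real l powr (-5/2))"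
      using eventually_ge_at_top[of 1]
    proof eventually_elim
      case (elim l)
      have "\<bar>1/2 - XX l/2\<bar> \<le> 1" using XX_nonneg[of l] XX_lt2[of l] by (simp add: abs_le_iff)
      then have "\<bar>H l\<bar> \<le> 153 * real l powr (-5/2)"
        unfolding H_def by (rule key_bound[OF elim]) simp_all
      then show ?case by simp
    qed
  qed
  have bo: "(\<lambda>l. (1/s) * (G1 l - G2 l) + H l) \<in> O(\<lambda>l. real l powr (-5/2))" using G H by (rule sum_in_bigo)
  have ev: "\<forall>\<^sub>F l in sequentially. (1/s) * (G1 l - G2 l) + H l = m_tilde l - tgt2 l"
    using eventually_ge_at_top[of 1]
  proof eventually_elim
    case (elim l)
    have z: "1 / sqrt (pi * (real l + 1/4)) = Zt l / s" unfolding Zt_def s_def sqrt_split by simp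
    have l0: "sqrt (real l) \<noteq> 0" "real l powr (3/2) \<noteq> 0" using elim by simp_all
    have t1: "1 / (2 * sqrt (pi * real l)) = (1 / (2 * sqrt (real l))) / s"
      unfolding s_def sqrt_split using l0 by (simp add: field_simps)
    have t2: "49 / (16 * sqrt pi * real l powr (3/2)) = (49 / (16 * real l powr (3/2))) / s"
      unfolding s_def using l0 by (simp add: field_simps)
    have t: "tgt2 l = 1/2 + A l / s"
      unfolding tgt2_def A_def t1 t2 by (simp add: add_divide_distrib diff_divide_distrib)
    show ?case
      unfolding H_def z t mtilde_closed G1_def G2_def
      using s by (simp add: field_simps)
  qed
  show ?thesis using landau_o.big.in_cong[OF ev] bo by simp
qed

theorem proposition4p1:
  shows "(\<forall>l::nat. l \<ge> 1 \<longrightarrow> m_tilde l < 1/2 \<and> 1/2 < m_lam l)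
    \<and> (\<lambda>l. m_lam l - (1/2 + 1 / (2 * sqrt (pi * real l))
                         + 15 / (16 * sqrt pi * real l powr (3/2))))
        \<in> O(\<lambda>l. real l powr (-5/2))
    \<and> (\<lambda>l. m_tilde l - (1/2 - 1 / (2 * sqrt (pi * real l))
                         + 49 / (16 * sqrt pi * real l powr (3/2))))
        \<in> O(\<lambda>l. real l powr (-5/2))"
  using ineq_part asym_m asym_mt unfolding tgt1_def tgt2_def by blast

end
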